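(* Let $R$ be a commutative ring with $\mathbb{Q}\subseteq R$, $\mathcal{A}$ a commutative unital $R$-algebra, and $\mathcal{E}$ a finitely generated projective $\mathcal{A}$-module with a symmetric, strongly nondegenerate, full $\mathcal{A}$-bilinear form $\langle\cdot,\cdot\rangle$. Let $\omega\in\Omega^r_{\mathcal{C}}(\mathcal{E})$ with $r\ge2$. Then there exist unique maps $\pi^{(p)}_\omega\in\operatorname{SDer}^p(\mathcal{A},\Omega^{r-2p}_{\mathcal{C}}(\mathcal{E}))$, one for each $p$ with $0\le2p\le r$, with two properties: (i) $\pi^{(0)}_\omega=\omega$; (ii) for every $p$ with $2(p+1)\le r$ and all $a_1,\dots,a_p\in\mathcal{A}$, the map $\pi^{(p+1)}_\omega(a_1,\dots,a_p,\cdot)$ is the symbol of $\pi^{(p)}_\omega(a_1,\dots,a_p)$. Concretely, $\pi^{(p+1)}_\omega(a_1,\dots,a_p,a)(x_1,\dots,x_{r-2p-2})=\sigma_{\pi^{(p)}_\omega(a_1,\dots,a_p)}(x_1,\dots,x_{r-2p-2})(a)$ for all $a\in\mathcal{A}$ and $x_i\in\mathcal{E}$.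
   Context: Strongly nondegenerate: $\mathcal{E}\to\operatorname{Hom}_{\mathcal{A}}(\mathcal{E},\mathcal{A})$ is an isomorphism. Full: every $a\in\mathcal{A}$ is a finite sum $\sum_i\langle x_i,y_i\rangle$. $\operatorname{Der}(\mathcal{A})$: $R$-linear derivations of $\mathcal{A}$. $\Omega^0_{\mathcal{C}}(\mathcal{E})=\mathcal{A}$. For $r\ge1$, $\Omega^r_{\mathcal{C}}(\mathcal{E})$ is the set of $\omega\in\operatorname{Hom}_R(\mathcal{E}^{\otimes_R r},\mathcal{A})$ satisfying two conditions: (a) $\omega(x_1,\dots,x_{r-1},ax_r)=a\,\omega(x_1,\dots,x_r)$ for all $a\in\mathcal{A}$; (b) if $r\ge2$, there is an $R$-multilinear map $\sigma_\omega:\mathcal{E}^{\otimes_R(r-2)}\to\operatorname{Der}(\mathcal{A})$ (the symbol of $\omega$) such that, for all $1\le i\le r-1$, $\omega(\dots,x_i,x_{i+1},\dots)+\omega(\dots,x_{i+1},x_i,\dots)=\sigma_\omega(x_1,\dots,\widehat{x_i},\widehat{x_{i+1}},\dots,x_r)\langle x_i,x_{i+1}\rangle$. The symbol is uniquely determined by fullness. For an $\mathcal{A}$-module $\mathcal{F}$, $\operatorname{SDer}^p(\mathcal{A},\mathcal{F})$ is the set of $R$-multilinear maps $\mathcal{A}^{\otimes_R p}\to\mathcal{F}$ that are symmetric and a derivation in each entry. By convention $\operatorname{SDer}^0(\mathcal{A},\mathcal{F})=\mathcal{F}$. *)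

theory Defs
  imports Main "HOL-Library.Multiset"
begin

text \<open>R is a type 'r, A is a type 'a with structure map alg : R -> A (a unital ring hom),
  E is a type 'e (abelian group) with A-action smul; R acts on E via alg.
  An element of Hom_R(E^{\<otimes> r}, A) is represented by an R-multilinear map on
  lists of length r (values on other lists are irrelevant).
  A family of maps pi^(p) : A^p -> Omega^{r-2p} is represented by one function
  pi :: 'a list => 'e list => 'a, where p is the length of the first argument.\<close>

definition ring_hom_map :: "('r::comm_ring_1 \<Rightarrow> 'a::comm_ring_1) \<Rightarrow> bool" where
  "ring_hom_map alg \<longleftrightarrow> alg 1 = 1 \<and> (\<forall>x y. alg (x + y) = alg x + alg y \<and> alg (x * y) = alg x * alg y)"

definition is_module :: "('a::comm_ring_1 \<Rightarrow> 'e::ab_group_add \<Rightarrow> 'e) \<Rightarrow> bool" where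
  "is_module smul \<longleftrightarrow> (\<forall>a b x y.
     smul a (x + y) = smul a x + smul a y \<and> smul (a + b) x = smul a x + smul b x \<and>
     smul (a * b) x = smul a (smul b x) \<and> smul 1 x = x)"

text \<open>Finitely generated projective: a direct summand of A^n for some n, i.e. there are
  A-linear maps iota : E -> A^n and q : A^n -> E with q o iota = id (A^n is modelled
  as functions nat => 'a vanishing outside {..<n}).\<close>
definition fg_projective :: "('a::comm_ring_1 \<Rightarrow> 'e::ab_group_add \<Rightarrow> 'e) \<Rightarrow> bool" where
  "fg_projective smul \<longleftrightarrow> (\<exists>(n::nat) (\<iota>::'e \<Rightarrow> nat \<Rightarrow> 'a) (q::(nat \<Rightarrow> 'a) \<Rightarrow> 'e).
     (\<forall>x i. n \<le> i \<longrightarrow> \<iota> x i = 0) \<and>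
     (\<forall>x y a. \<iota> (x + y) = (\<lambda>i. \<iota> x i + \<iota> y i) \<and> \<iota> (smul a x) = (\<lambda>i. a * \<iota> x i)) \<and>
     (\<forall>v w a. (\<forall>i. n \<le> i \<longrightarrow> v i = 0) \<and> (\<forall>i. n \<le> i \<longrightarrow> w i = 0) \<longrightarrow>
        q (\<lambda>i. v i + w i) = q v + q w \<and> q (\<lambda>i. a * v i) = smul a (q v)) \<and>
     (\<forall>x. q (\<iota> x) = x))"

definition A_linear :: "('a::comm_ring_1 \<Rightarrow> 'e::ab_group_add \<Rightarrow> 'e) \<Rightarrow> ('e \<Rightarrow> 'a) \<Rightarrow> bool" where
  "A_linear smul f \<longleftrightarrow> (\<forall>x y a. f (x + y) = f x + f y \<and> f (smul a x) = a * f x)"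

definition bilinear_form :: "('a::comm_ring_1 \<Rightarrow> 'e::ab_group_add \<Rightarrow> 'e) \<Rightarrow> ('e \<Rightarrow> 'e \<Rightarrow> 'a) \<Rightarrow> bool" where
  "bilinear_form smul B \<longleftrightarrow> (\<forall>x. A_linear smul (B x)) \<and> (\<forall>y. A_linear smul (\<lambda>x. B x y))"

definition symmetric_form :: "('e \<Rightarrow> 'e \<Rightarrow> 'a) \<Rightarrow> bool" where
  "symmetric_form B \<longleftrightarrow> (\<forall>x y. B x y = B y x)"

definition strongly_nondegenerate :: "('a::comm_ring_1 \<Rightarrow> 'e::ab_group_add \<Rightarrow> 'e) \<Rightarrow> ('e \<Rightarrow> 'e \<Rightarrow> 'a) \<Rightarrow> bool" where
  "strongly_nondegenerate smul B \<longleftrightarrow> inj B \<and> (\<forall>f. A_linear smul f \<longrightarrow> (\<exists>x. B x = f))"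

definition full_form :: "('e \<Rightarrow> 'e \<Rightarrow> 'a::comm_ring_1) \<Rightarrow> bool" where
  "full_form B \<longleftrightarrow> (\<forall>a. \<exists>ps. a = sum_list (map (\<lambda>(x, y). B x y) ps))"

definition multilin_R :: "('r::comm_ring_1 \<Rightarrow> 'a::comm_ring_1) \<Rightarrow> ('a \<Rightarrow> 'e::ab_group_add \<Rightarrow> 'e) \<Rightarrow> nat \<Rightarrow> ('e list \<Rightarrow> 'a) \<Rightarrow> bool" where
  "multilin_R alg smul n f \<longleftrightarrow> (\<forall>xs i x y c. length xs = n \<and> i < n \<longrightarrow>
     f (xs[i := x + y]) = f (xs[i := x]) + f (xs[i := y]) \<and>
     f (xs[i := smul (alg c) x]) = alg c * f (xs[i := x]))"

definition is_der :: "('r::comm_ring_1 \<Rightarrow> 'a::comm_ring_1) \<Rightarrow> ('a \<Rightarrow> 'a) \<Rightarrow> bool" where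
  "is_der alg d \<longleftrightarrow> (\<forall>a b c. d (a + b) = d a + d b \<and> d (alg c * a) = alg c * d a \<and>
     d (a * b) = a * d b + b * d a)"

definition is_symbol :: "('r::comm_ring_1 \<Rightarrow> 'a::comm_ring_1) \<Rightarrow> ('a \<Rightarrow> 'e::ab_group_add \<Rightarrow> 'e) \<Rightarrow>
    ('e \<Rightarrow> 'e \<Rightarrow> 'a) \<Rightarrow> nat \<Rightarrow> ('e list \<Rightarrow> 'a) \<Rightarrow> ('e list \<Rightarrow> 'a \<Rightarrow> 'a) \<Rightarrow> bool" where
  "is_symbol alg smul B r \<omega> \<sigma> \<longleftrightarrow>
     (\<forall>a. multilin_R alg smul (r - 2) (\<lambda>xs. \<sigma> xs a)) \<and>
     (\<forall>xs. length xs = r - 2 \<longrightarrow> is_der alg (\<sigma> xs)) \<and>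
     (\<forall>us vs x y. length us + length vs = r - 2 \<longrightarrow>
        \<omega> (us @ [x, y] @ vs) + \<omega> (us @ [y, x] @ vs) = \<sigma> (us @ vs) (B x y))"

text \<open>Omega^r_C(E). For r = 0 every map is allowed (the element is its value at []).\<close>
definition Omega_C :: "('r::comm_ring_1 \<Rightarrow> 'a::comm_ring_1) \<Rightarrow> ('a \<Rightarrow> 'e::ab_group_add \<Rightarrow> 'e) \<Rightarrow>
    ('e \<Rightarrow> 'e \<Rightarrow> 'a) \<Rightarrow> nat \<Rightarrow> ('e list \<Rightarrow> 'a) \<Rightarrow> bool" where
  "Omega_C alg smul B r \<omega> \<longleftrightarrow>
     multilin_R alg smul r \<omega> \<and>
     (1 \<le> r \<longrightarrow> (\<forall>xs x a. length xs = r - 1 \<longrightarrow> \<omega> (xs @ [smul a x]) = a * \<omega> (xs @ [x]))) \<and>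
     (2 \<le> r \<longrightarrow> (\<exists>\<sigma>. is_symbol alg smul B r \<omega> \<sigma>))"

text \<open>The A-module structure on Omega is pointwise; equality in Omega^(r-2p) is equality on
  argument lists of length r-2p.\<close>
definition SDer_Omega :: "('r::comm_ring_1 \<Rightarrow> 'a::comm_ring_1) \<Rightarrow> ('a \<Rightarrow> 'e::ab_group_add \<Rightarrow> 'e) \<Rightarrow>
    ('e \<Rightarrow> 'e \<Rightarrow> 'a) \<Rightarrow> nat \<Rightarrow> nat \<Rightarrow> ('a list \<Rightarrow> 'e list \<Rightarrow> 'a) \<Rightarrow> bool" where
  "SDer_Omega alg smul B r p \<pi> \<longleftrightarrow>
     (\<forall>as. length as = p \<longrightarrow> Omega_C alg smul B (r - 2 * p) (\<pi> as)) \<and>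
     (\<forall>as i a b c xs. length as = p \<and> i < p \<and> length xs = r - 2 * p \<longrightarrow>
        \<pi> (as[i := a + b]) xs = \<pi> (as[i := a]) xs + \<pi> (as[i := b]) xs \<and>
        \<pi> (as[i := alg c * a]) xs = alg c * \<pi> (as[i := a]) xs \<and>
        \<pi> (as[i := a * b]) xs = a * \<pi> (as[i := b]) xs + b * \<pi> (as[i := a]) xs) \<and>
     (\<forall>as bs xs. length as = p \<and> mset as = mset bs \<and> length xs = r - 2 * p \<longrightarrow>
        \<pi> as xs = \<pi> bs xs)"

definition symbol_family :: "('r::comm_ring_1 \<Rightarrow> 'a::comm_ring_1) \<Rightarrow> ('a \<Rightarrow> 'e::ab_group_add \<Rightarrow> 'e) \<Rightarrow>
    ('e \<Rightarrow> 'e \<Rightarrow> 'a) \<Rightarrow> nat \<Rightarrow> ('e list \<Rightarrow> 'a) \<Rightarrow> ('a list \<Rightarrow> 'e list \<Rightarrow> 'a) \<Rightarrow> bool" where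
  "symbol_family alg smul B r \<omega> \<pi> \<longleftrightarrow>
     (\<forall>p. 2 * p \<le> r \<longrightarrow> SDer_Omega alg smul B r p \<pi>) \<and>
     (\<forall>xs. length xs = r \<longrightarrow> \<pi> [] xs = \<omega> xs) \<and>
     (\<forall>as. 2 * (length as + 1) \<le> r \<longrightarrow>
        is_symbol alg smul B (r - 2 * length as) (\<pi> as) (\<lambda>xs a. \<pi> (as @ [a]) xs))"

end

theory Submission
  imports Defs
begin


definition addf :: "('a::ab_group_add \<Rightarrow> 'b::ab_group_add) \<Rightarrow> bool" where
  "addf h \<longleftrightarrow> (\<forall>u v. h (u + v) = h u + h v)"

lemma addf_0: "addf h \<Longrightarrow> h 0 = 0"
  unfolding addf_def by (metis add_cancel_right_right add_0)

lemma addf_sum_list: "addf h \<Longrightarrow> h (sum_list (map f ps)) = sum_list (map (\<lambda>p. h (f p)) ps)"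
  by (induction ps) (auto simp: addf_0, simp add: addf_def)

lemma addf_sum_list_fun:
  "(\<forall>p\<in>set ps. addf (F p)) \<Longrightarrow> addf (\<lambda>a. sum_list (map (\<lambda>p. F p a) ps))"
  by (induction ps) (auto simp: addf_def algebra_simps)

lemma agree_gen:
  assumes "full_form B" "addf h" "addf h'" "\<And>x y. h (B x y) = h' (B x y)"
  shows "h a = h' a"
proof -
  obtain ps where a: "a = sum_list (map (\<lambda>(x,y). B x y) ps)"
    using assms(1) unfolding full_form_def by blast
  have "map (\<lambda>p. h ((\<lambda>(x,y). B x y) p)) ps = map (\<lambda>p. h' ((\<lambda>(x,y). B x y) p)) ps"
    by (intro map_cong) (auto split: prod.split simp: assms(4))
  then show ?thesis using a addf_sum_list[OF assms(2)] addf_sum_list[OF assms(3)] by metis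
qed

lemma der_addf: "is_der alg d \<Longrightarrow> addf d"
  by (simp add: is_der_def addf_def)

lemma der_add:
  assumes d: "is_der alg d" and d': "is_der alg d'"
  shows "is_der alg (\<lambda>a. d a + d' a)"
  unfolding is_der_def
proof (intro allI conjI)
  fix a b c
  have 1: "d (a + b) = d a + d b" "d (alg c * a) = alg c * d a" "d (a * b) = a * d b + b * d a"
    using d unfolding is_der_def by blast+
  have 2: "d' (a + b) = d' a + d' b" "d' (alg c * a) = alg c * d' a" "d' (a * b) = a * d' b + b * d' a"
    using d' unfolding is_der_def by blast+
  show "d (a + b) + d' (a + b) = d a + d' a + (d b + d' b)" by (simp only: 1 2 ac_simps)
  show "d (alg c * a) + d' (alg c * a) = alg c * (d a + d' a)" by (simp only: 1 2 distrib_left)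
  show "d (a * b) + d' (a * b) = a * (d b + d' b) + b * (d a + d' a)" by (simp only: 1 2 distrib_left ac_simps)
qed

lemma der_sum_list: "(\<forall>p\<in>set ps. is_der alg (D p)) \<Longrightarrow> is_der alg (\<lambda>a. sum_list (map (\<lambda>p. D p a) ps))"
proof (induction ps)
  case Nil then show ?case by (simp add: is_der_def)
next
  case (Cons p ps) then show ?case using der_add[of alg "D p"] by simp
qed

lemma sum_list_add2: fixes f :: "'x \<Rightarrow> 'b::comm_monoid_add" shows "sum_list (map f ps) + sum_list (map g ps) = sum_list (map (\<lambda>p. f p + g p) ps)"
  by (induction ps) (simp_all add: ac_simps)

lemma ml_add: "multilin_R alg smul m f \<Longrightarrow> multilin_R alg smul m g \<Longrightarrow> multilin_R alg smul m (\<lambda>xs. f xs + g xs)"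
  by (simp add: multilin_R_def algebra_simps)

lemma ml_sum_list: "(\<forall>p\<in>set ps. multilin_R alg smul m (F p)) \<Longrightarrow>
   multilin_R alg smul m (\<lambda>xs. sum_list (map (\<lambda>p. F p xs) ps))"
proof (induction ps)
  case Nil then show ?case by (simp add: multilin_R_def)
next
  case (Cons p ps) then show ?case using ml_add[of alg smul m "F p"] by simp
qed

lemma ml_shift:
  fixes f :: "'e::ab_group_add list \<Rightarrow> 'a::comm_ring_1" and alg :: "'r::comm_ring_1 \<Rightarrow> 'a"
  assumes H: "multilin_R alg smul (Suc (Suc m)) f"
  shows "multilin_R alg smul m (\<lambda>zs. f (x # y # zs))"
  unfolding multilin_R_def
proof (intro allI impI)
  fix xs :: "'e list" and i u v c assume "length xs = m \<and> i < m"
  then show "f (x # y # xs[i := u + v]) = f (x # y # xs[i := u]) + f (x # y # xs[i := v]) \<and>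
       f (x # y # xs[i := smul (alg c) u]) = alg c * f (x # y # xs[i := u])"
    using H[unfolded multilin_R_def, rule_format, of "x#y#xs" "Suc (Suc i)" u v c] by simp
qed

lemma sym_gen:
  assumes "is_symbol alg smul B n \<omega> \<sigma>" "length zs + 2 = n"
  shows "\<sigma> zs (B x y) = \<omega> (x#y#zs) + \<omega> (y#x#zs)"
proof -
  from assms(1) have "\<forall>us vs x y. length us + length vs = n - 2 \<longrightarrow>
     \<omega> (us @ [x, y] @ vs) + \<omega> (us @ [y, x] @ vs) = \<sigma> (us @ vs) (B x y)"
    unfolding is_symbol_def by blast
  from this[rule_format, of "[]" zs x y] assms(2) show ?thesis by simp
qed

lemma sym_rel:
  assumes "is_symbol alg smul B n \<omega> \<sigma>" "length us + length vs + 2 = n"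
  shows "\<sigma> (us @ vs) (B x y) = \<omega> (us @ [x, y] @ vs) + \<omega> (us @ [y, x] @ vs)"
proof -
  from assms(1) have "\<forall>us vs x y. length us + length vs = n - 2 \<longrightarrow>
     \<omega> (us @ [x, y] @ vs) + \<omega> (us @ [y, x] @ vs) = \<sigma> (us @ vs) (B x y)"
    unfolding is_symbol_def by blast
  from this[rule_format, of us vs x y] assms(2) show ?thesis by simp
qed

lemma sym_der:
  assumes "is_symbol alg smul B n \<omega> \<sigma>" "length zs + 2 = n"
  shows "is_der alg (\<sigma> zs)"
  using assms unfolding is_symbol_def by auto

lemma symbol_det:
  assumes "is_symbol alg smul B n \<omega> \<sigma>" "length zs + 2 = n"
    and "c = sum_list (map (\<lambda>(x,y). B x y) ps)"
  shows "\<sigma> zs c = sum_list (map (\<lambda>(x,y). \<omega> (x#y#zs) + \<omega> (y#x#zs)) ps)"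
proof -
  have "addf (\<sigma> zs)" using sym_der[OF assms(1,2)] der_addf by blast
  then have "\<sigma> zs c = sum_list (map (\<lambda>p. \<sigma> zs ((\<lambda>(x,y). B x y) p)) ps)"
    using assms(3) addf_sum_list by blast
  also have "\<dots> = sum_list (map (\<lambda>(x,y). \<omega> (x#y#zs) + \<omega> (y#x#zs)) ps)"
    by (intro arg_cong[where f=sum_list] map_cong) (auto split: prod.split simp: sym_gen[OF assms(1,2)])
  finally show ?thesis .
qed

lemma symbol_unique:
  assumes "full_form B" "is_symbol alg smul B n \<omega> \<sigma>" "is_symbol alg smul B n \<omega>' \<sigma>'"
    "\<forall>xs. length xs = n \<longrightarrow> \<omega> xs = \<omega>' xs" "length zs + 2 = n"
  shows "\<sigma> zs a = \<sigma>' zs a"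
  apply (rule agree_gen[OF assms(1), of "\<sigma> zs" "\<sigma>' zs"])
    apply (rule der_addf[OF sym_der[OF assms(2,5)]])
   apply (rule der_addf[OF sym_der[OF assms(3,5)]])
  using assms(4,5) by (simp add: sym_gen[OF assms(2,5)] sym_gen[OF assms(3,5)])

definition repr :: "('e \<Rightarrow> 'e \<Rightarrow> 'a::comm_ring_1) \<Rightarrow> 'a \<Rightarrow> ('e \<times> 'e) list" where
  "repr B c = (SOME ps. c = sum_list (map (\<lambda>(x,y). B x y) ps))"

lemma repr: "full_form B \<Longrightarrow> c = sum_list (map (\<lambda>(x,y). B x y) (repr B c))"
  unfolding repr_def full_form_def by (rule someI_ex) blast

definition Gf :: "('e \<Rightarrow> 'e \<Rightarrow> 'a::comm_ring_1) \<Rightarrow> ('e list \<Rightarrow> 'a) \<Rightarrow> 'e list \<Rightarrow> 'a \<Rightarrow> 'a" where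
  "Gf B f xs c = sum_list (map (\<lambda>(x,y). f (x#y#xs) + f (y#x#xs)) (repr B c))"

lemma sym_Gf: "full_form B \<Longrightarrow> is_symbol alg smul B n \<omega> \<sigma> \<Longrightarrow> length zs + 2 = n \<Longrightarrow> \<sigma> zs c = Gf B \<omega> zs c"
  unfolding Gf_def by (rule symbol_det) (auto intro: repr)

lemma lin_list: fixes f :: "'e list \<Rightarrow> 'a::comm_ring_1" shows "(\<And>x y. f (x#y#xs) = k1 * f1 (x#y#xs) + k2 * f2 (x#y#xs)) \<Longrightarrow>
  sum_list (map (\<lambda>(x,y). f (x#y#xs) + f (y#x#xs)) ps) =
  k1 * sum_list (map (\<lambda>(x,y). f1 (x#y#xs) + f1 (y#x#xs)) ps) + k2 * sum_list (map (\<lambda>(x,y). f2 (x#y#xs) + f2 (y#x#xs)) ps)"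
  by (induction ps) (auto simp: algebra_simps)

lemma Gf_lin: fixes f :: "'e list \<Rightarrow> 'a::comm_ring_1" shows "(\<And>x y. f (x#y#xs) = k1 * f1 (x#y#xs) + k2 * f2 (x#y#xs)) \<Longrightarrow>
   Gf B f xs c = k1 * Gf B f1 xs c + k2 * Gf B f2 xs c"
  unfolding Gf_def by (rule lin_list)

lemma Gf_cong: "(\<And>x y. f (x#y#xs) = f' (x#y#xs)) \<Longrightarrow> Gf B f xs c = Gf B f' xs c"
  unfolding Gf_def by (intro arg_cong[where f=sum_list] map_cong) (auto split: prod.split)



lemma Omega_step:
  fixes alg :: "'r::comm_ring_1 \<Rightarrow> 'a::comm_ring_1"
    and smul :: "'a \<Rightarrow> 'e::ab_group_add \<Rightarrow> 'e"
    and B :: "'e \<Rightarrow> 'e \<Rightarrow> 'a" and \<sigma> :: "'e list \<Rightarrow> 'a \<Rightarrow> 'a" and \<omega> :: "'e list \<Rightarrow> 'a"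
  assumes full: "full_form B" and om: "Omega_C alg smul B n \<omega>" and n2: "2 \<le> n"
    and sy: "is_symbol alg smul B n \<omega> \<sigma>"
  shows "Omega_C alg smul B (n - 2) (\<lambda>xs. \<sigma> xs a)"
  unfolding Omega_C_def
proof (intro conjI impI)
  show "multilin_R alg smul (n - 2) (\<lambda>xs. \<sigma> xs a)" using sy unfolding is_symbol_def by blast
next
  assume n3: "1 \<le> n - 2"
  have omlast: "\<forall>xs x a. length xs = n - 1 \<longrightarrow> \<omega> (xs @ [smul a x]) = a * \<omega> (xs @ [x])"
    using om n2 unfolding Omega_C_def by auto
  show "\<forall>xs x c. length xs = n - 2 - 1 \<longrightarrow> \<sigma> (xs @ [smul c x]) a = c * \<sigma> (xs @ [x]) a"
  proof (intro allI impI)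
    fix xs :: "'e list" and x c assume l: "length xs = n - 2 - 1"
    have l2: "length (xs @ [z]) + 2 = n" for z using l n3 by simp
    show "\<sigma> (xs @ [smul c x]) a = c * \<sigma> (xs @ [x]) a"
    proof (rule agree_gen[OF full, of "\<lambda>a. \<sigma> (xs @ [smul c x]) a" "\<lambda>a. c * \<sigma> (xs @ [x]) a"])
      show "addf (\<sigma> (xs @ [smul c x]))" using der_addf sym_der[OF sy l2] by blast
      show "addf (\<lambda>a. c * \<sigma> (xs @ [x]) a)" using der_addf[OF sym_der[OF sy l2]]
        by (simp add: addf_def distrib_left)
      fix u v
      have "length (u # v # xs) = n - 1" using l n3 by simp
      then show "\<sigma> (xs @ [smul c x]) (B u v) = c * \<sigma> (xs @ [x]) (B u v)"
        using omlast[rule_format, of "u#v#xs" c x] omlast[rule_format, of "v#u#xs" c x]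
        by (simp add: sym_gen[OF sy l2] distrib_left)
    qed
  qed
next
  assume n4: "2 \<le> n - 2"
  define ps where "ps = repr B a"
  have aeq: "a = sum_list (map (\<lambda>(x,y). B x y) ps)" unfolding ps_def by (rule repr[OF full])
  define \<tau> where "\<tau> = (\<lambda>zs b. sum_list (map (\<lambda>(x,y). \<sigma> (x#y#zs) b + \<sigma> (y#x#zs) b) ps))"
  have "is_symbol alg smul B (n - 2) (\<lambda>xs. \<sigma> xs a) \<tau>"
    unfolding is_symbol_def
  proof (intro conjI allI impI)
    fix b
    have mlb: "multilin_R alg smul (Suc (Suc (n - 2 - 2))) (\<lambda>xs. \<sigma> xs b)"
      using sy n4 unfolding is_symbol_def by (metis Suc_diff_le add_2_eq_Suc diff_Suc_Suc le_add_diff_inverse)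
    show "multilin_R alg smul (n - 2 - 2) (\<lambda>zs. \<tau> zs b)"
      unfolding \<tau>_def
      apply (rule ml_sum_list)
      using ml_add[OF ml_shift[OF mlb] ml_shift[OF mlb]] by (auto split: prod.split)
  next
    fix zs :: "'e list" assume l: "length zs = n - 2 - 2"
    have "length (x # y # zs) + 2 = n" for x y using l n4 by simp
    then show "is_der alg (\<tau> zs)"
      unfolding \<tau>_def
      apply (intro der_sum_list ballI)
      using der_add sym_der[OF sy] by (fastforce split: prod.split)
  next
    fix us vs :: "'e list" and z w assume l: "length us + length vs = n - 2 - 2"
    have l1: "length (us @ [p, q] @ vs) + 2 = n" for p q using l n4 by simp
    have l2: "length (x # y # us) + length vs + 2 = n" for x y using l n4 by simp
    have "\<sigma> (us @ [z, w] @ vs) a + \<sigma> (us @ [w, z] @ vs) a =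
      sum_list (map (\<lambda>(x,y). \<omega> (x#y#us @ [z, w] @ vs) + \<omega> (y#x#us @ [z, w] @ vs)) ps) +
      sum_list (map (\<lambda>(x,y). \<omega> (x#y#us @ [w, z] @ vs) + \<omega> (y#x#us @ [w, z] @ vs)) ps)"
      using symbol_det[OF sy l1 aeq] by simp
    also have "\<dots> = sum_list (map (\<lambda>p. (\<lambda>(x,y). \<omega> (x#y#us @ [z, w] @ vs) + \<omega> (y#x#us @ [z, w] @ vs)) p
       + (\<lambda>(x,y). \<omega> (x#y#us @ [w, z] @ vs) + \<omega> (y#x#us @ [w, z] @ vs)) p) ps)"
      by (rule sum_list_add2)
    also have "\<dots> = \<tau> (us @ vs) (B z w)"
      unfolding \<tau>_def
      apply (intro arg_cong[where f=sum_list] map_cong refl)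
      using sym_rel[OF sy l2]
      by (auto split: prod.split simp: ac_simps)
    finally show "\<sigma> (us @ [z, w] @ vs) a + \<sigma> (us @ [w, z] @ vs) a = \<tau> (us @ vs) (B z w)" .
  qed
  then show "\<exists>\<tau>. is_symbol alg smul B (n - 2) (\<lambda>xs. \<sigma> xs a) \<tau>" by blast
qed



lemma swap_sym:
  fixes alg :: "'r::comm_ring_1 \<Rightarrow> 'a::comm_ring_1"
    and smul :: "'a \<Rightarrow> 'e::ab_group_add \<Rightarrow> 'e"
    and B :: "'e \<Rightarrow> 'e \<Rightarrow> 'a" and \<sigma> :: "'e list \<Rightarrow> 'a \<Rightarrow> 'a" and \<eta> :: "'e list \<Rightarrow> 'a"
    and \<tau> :: "'a \<Rightarrow> 'e list \<Rightarrow> 'a \<Rightarrow> 'a"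
  assumes full: "full_form B" and sy: "is_symbol alg smul B n \<eta> \<sigma>"
    and st: "\<And>a. is_symbol alg smul B (n - 2) (\<lambda>xs. \<sigma> xs a) (\<tau> a)"
    and zs: "length zs + 4 = n"
  shows "\<tau> a zs b = \<tau> b zs a"
proof -
  define D where "D = (\<lambda>a b. \<tau> a zs b)"
  have lz: "length zs + 2 = n - 2" using zs by simp
  have lz2: "length (p # q # zs) + 2 = n" for p q using zs by simp
  have derD: "addf (D a)" for a unfolding D_def using der_addf sym_der[OF st lz] by blast
  have genb: "D a (B z w) = \<sigma> (z#w#zs) a + \<sigma> (w#z#zs) a" for a z w
    unfolding D_def using sym_gen[OF st lz] by simp
  have addA_gen: "addf (\<lambda>a. D a (B z w))" for z w
    unfolding genb using der_addf[OF sym_der[OF sy lz2]] by (simp add: addf_def ac_simps)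
  have addA: "addf (\<lambda>a. D a b)" for b
  proof -
    obtain ps where b: "b = sum_list (map (\<lambda>(x,y). B x y) ps)"
      using full unfolding full_form_def by blast
    have "D a b = sum_list (map (\<lambda>p. D a ((\<lambda>(x,y). B x y) p)) ps)" for a
      using b addf_sum_list[OF derD] by blast
    moreover have "addf (\<lambda>a. sum_list (map (\<lambda>p. D a ((\<lambda>(x,y). B x y) p)) ps))"
      by (rule addf_sum_list_fun) (auto split: prod.split intro: addA_gen)
    ultimately show ?thesis by simp
  qed
  have rel: "\<sigma> (p # q # zs) (B z w) = \<eta> (p # q # z # w # zs) + \<eta> (p # q # w # z # zs)" for p q z w
    using sym_rel[OF sy, of "[p,q]" zs z w] zs by simp
  have gen2: "D (B x y) (B z w) = D (B z w) (B x y)" for x y z w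
    unfolding genb using sym_gen[OF sy lz2] rel by (simp add: ac_simps)
  have stepA: "D a (B z w) = D (B z w) a" for a z w
    by (rule agree_gen[OF full addA_gen derD]) (rule gen2)
  have "D a b = D b a"
    by (rule agree_gen[OF full derD addA]) (rule stepA)
  then show ?thesis unfolding D_def .
qed

fun rho :: "('r::comm_ring_1 \<Rightarrow> 'a::comm_ring_1) \<Rightarrow> ('a \<Rightarrow> 'e::ab_group_add \<Rightarrow> 'e) \<Rightarrow> ('e \<Rightarrow> 'e \<Rightarrow> 'a)
   \<Rightarrow> nat \<Rightarrow> ('e list \<Rightarrow> 'a) \<Rightarrow> 'a list \<Rightarrow> 'e list \<Rightarrow> 'a" where
  "rho alg smul B r \<omega> [] = \<omega>"
| "rho alg smul B r \<omega> (a # bs) = (\<lambda>xs. (SOME \<sigma>. is_symbol alg smul B (r - 2 * length bs) (rho alg smul B r \<omega> bs) \<sigma>) xs a)"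

definition piF where "piF alg smul B r \<omega> as = rho alg smul B r \<omega> (rev as)"

lemma piF_Nil: "piF alg smul B r \<omega> [] = \<omega>" by (simp add: piF_def)
lemma piF_snoc: "piF alg smul B r \<omega> (as @ [a]) =
  (\<lambda>xs. (SOME \<sigma>. is_symbol alg smul B (r - 2 * length as) (piF alg smul B r \<omega> as) \<sigma>) xs a)"
  by (simp add: piF_def)



lemma main_exist:
  fixes alg :: "'r::comm_ring_1 \<Rightarrow> 'a::comm_ring_1"
    and smul :: "'a \<Rightarrow> 'e::ab_group_add \<Rightarrow> 'e"
    and B :: "'e \<Rightarrow> 'e \<Rightarrow> 'a"
    and \<omega> :: "'e list \<Rightarrow> 'a"
    and r :: nat
  assumes full: "full_form B" and om: "Omega_C alg smul B r \<omega>"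
  shows "\<exists>\<pi>. symbol_family alg smul B r \<omega> \<pi> \<and>
           (\<forall>\<pi>'. symbol_family alg smul B r \<omega> \<pi>' \<longrightarrow>
              (\<forall>as xs. 2 * length as \<le> r \<and> length xs = r - 2 * length as \<longrightarrow>
                 \<pi>' as xs = \<pi> as xs))"
proof -
  define \<pi> where "\<pi> = piF alg smul B r \<omega>"
  have pnil: "\<pi> [] = \<omega>" unfolding \<pi>_def by (rule piF_Nil)
  have psnoc: "\<pi> (as @ [a]) = (\<lambda>xs. (SOME \<sigma>. is_symbol alg smul B (r - 2 * length as) (\<pi> as) \<sigma>) xs a)" for as a
    unfolding \<pi>_def by (rule piF_snoc)
  have P1: "2 * length as \<le> r \<Longrightarrow> Omega_C alg smul B (r - 2 * length as) (\<pi> as)" for as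
  proof (induction as rule: rev_induct)
    case Nil then show ?case using om pnil by simp
  next
    case (snoc a as)
    then have IH: "Omega_C alg smul B (r - 2 * length as) (\<pi> as)" by simp
    have n2: "2 \<le> r - 2 * length as" using snoc.prems by simp
    then obtain \<sigma> where "is_symbol alg smul B (r - 2 * length as) (\<pi> as) \<sigma>"
      using IH unfolding Omega_C_def by blast
    then have "is_symbol alg smul B (r - 2 * length as) (\<pi> as) (SOME \<sigma>. is_symbol alg smul B (r - 2 * length as) (\<pi> as) \<sigma>)"
      by (rule someI[of "\<lambda>\<sigma>. is_symbol alg smul B (r - 2 * length as) (\<pi> as) \<sigma>"])
    from Omega_step[OF full IH n2 this, of a] show ?case
      by (simp add: psnoc)
  qed
  have P2: "2 * (length as + 1) \<le> r \<Longrightarrow> is_symbol alg smul B (r - 2 * length as) (\<pi> as) (\<lambda>xs a. \<pi> (as @ [a]) xs)" for as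
  proof -
    assume h: "2 * (length as + 1) \<le> r"
    then have IH: "Omega_C alg smul B (r - 2 * length as) (\<pi> as)" using P1 by simp
    have n2: "2 \<le> r - 2 * length as" using h by simp
    then obtain \<sigma> where "is_symbol alg smul B (r - 2 * length as) (\<pi> as) \<sigma>"
      using IH unfolding Omega_C_def by blast
    then have "is_symbol alg smul B (r - 2 * length as) (\<pi> as) (SOME \<sigma>. is_symbol alg smul B (r - 2 * length as) (\<pi> as) \<sigma>)"
      by (rule someI[of "\<lambda>\<sigma>. is_symbol alg smul B (r - 2 * length as) (\<pi> as) \<sigma>"])
    then show ?thesis by (simp add: psnoc)
  qed
  have P3: "\<pi> (as @ [c]) xs = Gf B (\<pi> as) xs c"
    if "2 * (length as + 1) \<le> r" "length xs + 2 = r - 2 * length as" for as c xs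
    using sym_Gf[OF full P2[OF that(1)] that(2)] by simp
  have Lin: "2 * length as \<le> r \<Longrightarrow> i < length as \<Longrightarrow> length xs = r - 2 * length as \<Longrightarrow>
     \<pi> (as[i := a + b]) xs = \<pi> (as[i := a]) xs + \<pi> (as[i := b]) xs \<and>
     \<pi> (as[i := alg c * a]) xs = alg c * \<pi> (as[i := a]) xs \<and>
     \<pi> (as[i := a * b]) xs = a * \<pi> (as[i := b]) xs + b * \<pi> (as[i := a]) xs" for as i xs a b c
  proof (induction as arbitrary: i xs rule: rev_induct)
    case Nil then show ?case by simp
  next
    case (snoc d as)
    show ?case
    proof (cases "i = length as")
      case True
      have h: "2 * (length as + 1) \<le> r" using snoc.prems by simp
      have "is_der alg (\<lambda>a. \<pi> (as @ [a]) xs)"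
        using sym_der[OF P2[OF h]] snoc.prems by simp
      then have D: "\<forall>a b c. \<pi> (as @ [a + b]) xs = \<pi> (as @ [a]) xs + \<pi> (as @ [b]) xs \<and>
        \<pi> (as @ [alg c * a]) xs = alg c * \<pi> (as @ [a]) xs \<and>
        \<pi> (as @ [a * b]) xs = a * \<pi> (as @ [b]) xs + b * \<pi> (as @ [a]) xs"
        unfolding is_der_def by blast
      have U: "(as @ [d])[i := v] = as @ [v]" for v using True by simp
      show ?thesis unfolding U using D[rule_format, of a b c] by (elim conjE) (intro conjI; assumption)
    next
      case False
      then have i: "i < length as" using snoc.prems by simp
      have h: "2 * (length as + 1) \<le> r" using snoc.prems by simp
      have lx: "length xs + 2 = r - 2 * length (as[i := v])" for v using snoc.prems by simp
      have IH: "\<pi> (as[i := a + b]) (x#y#xs) = \<pi> (as[i := a]) (x#y#xs) + \<pi> (as[i := b]) (x#y#xs) \<and>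
        \<pi> (as[i := alg c * a]) (x#y#xs) = alg c * \<pi> (as[i := a]) (x#y#xs) \<and>
        \<pi> (as[i := a * b]) (x#y#xs) = a * \<pi> (as[i := b]) (x#y#xs) + b * \<pi> (as[i := a]) (x#y#xs)" for x y
        using snoc.IH[of i "x#y#xs"] snoc.prems i by simp
      have e: "(as @ [d])[i := v] = as[i := v] @ [d]" for v using i by (simp add: list_update_append1)
      have h': "2 * (length (as[i := v]) + 1) \<le> r" for v using h by simp
      note G = P3[OF h' lx]
      show ?thesis unfolding e G
        using Gf_lin[of "\<pi> (as[i := a + b])" xs 1 "\<pi> (as[i := a])" 1 "\<pi> (as[i := b])" B d]
          Gf_lin[of "\<pi> (as[i := alg c * a])" xs "alg c" "\<pi> (as[i := a])" 0 "\<pi> (as[i := a])" B d]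
          Gf_lin[of "\<pi> (as[i := a * b])" xs a "\<pi> (as[i := b])" b "\<pi> (as[i := a])" B d]
          IH by simp
    qed
  qed
  have congr: "\<pi> (as' @ [c]) xs = \<pi> (cs' @ [c]) xs"
    if "\<And>zs. length zs = r - 2 * length as' \<Longrightarrow> \<pi> as' zs = \<pi> cs' zs" "length cs' = length as'"
       "2 * (length as' + 1) \<le> r" "length xs + 2 = r - 2 * length as'" for as' cs' c xs
  proof -
    have "\<pi> (as' @ [c]) xs = Gf B (\<pi> as') xs c" using P3 that by simp
    also have "\<dots> = Gf B (\<pi> cs') xs c" by (rule Gf_cong) (use that in simp)
    also have "\<dots> = \<pi> (cs' @ [c]) xs" using P3 that by simp
    finally show ?thesis .
  qed
  have swap: "\<pi> (ds @ [a, b]) xs = \<pi> (ds @ [b, a]) xs"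
    if "2 * (length ds + 2) \<le> r" "length xs = r - 2 * (length ds + 2)" for ds a b xs
  proof -
    have sy: "is_symbol alg smul B (r - 2 * length ds) (\<pi> ds) (\<lambda>xs a. \<pi> (ds @ [a]) xs)"
      using P2 that by simp
    have st: "is_symbol alg smul B (r - 2 * length ds - 2) (\<lambda>xs. \<pi> (ds @ [a]) xs) (\<lambda>xs b. \<pi> (ds @ [a, b]) xs)" for a
      using P2[of "ds @ [a]"] that by (simp add: algebra_simps)
    show ?thesis
      using swap_sym[OF full sy st, of xs a b] that by simp
  qed
  have Sym: "length as = p \<Longrightarrow> mset as = mset bs \<Longrightarrow> 2 * p \<le> r \<Longrightarrow> length xs = r - 2 * p \<Longrightarrow>
      \<pi> as xs = \<pi> bs xs" for p as bs xs
  proof (induction p arbitrary: as bs xs)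
    case 0 then show ?case by simp
  next
    case (Suc p)
    obtain as' a where as: "as = as' @ [a]" using Suc.prems(1) by (cases as rule: rev_exhaust) auto
    have lb: "length bs = Suc p" using Suc.prems(1,2) by (metis size_mset)
    obtain bs' b where bs: "bs = bs' @ [b]" using lb by (cases bs rule: rev_exhaust) auto
    have la: "length as' = p" using Suc.prems(1) as by simp
    have lb': "length bs' = p" using lb bs by simp
    have m: "mset as' + {#a#} = mset bs' + {#b#}" using Suc.prems(2) as bs by simp
    have r: "2 * (p + 1) \<le> r" using Suc.prems(3) by simp
    have lx: "length xs + 2 = r - 2 * p" using Suc.prems(3,4) by simp
    show ?case
    proof (cases "a = b")
      case True
      then have mm: "mset as' = mset bs'" using m by simp
      have ih: "\<pi> as' zs = \<pi> bs' zs" if "length zs = r - 2 * length as'" for zs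
        using Suc.IH[OF la mm] r that la by simp
      have "\<pi> (as' @ [a]) xs = \<pi> (bs' @ [a]) xs"
        by (rule congr[OF ih]) (use la lb' r lx in simp_all)
      then show ?thesis unfolding as bs True .
    next
      case False
      have "b \<in># mset as' + {#a#}" using m by simp
      then have bin: "b \<in> set as'" using False by simp
      define ds where "ds = remove1 b as'"
      have mds: "mset as' = mset (ds @ [b])" unfolding ds_def using bin by simp
      have lds0: "length (ds @ [b]) = length as'" using mds by (metis size_mset)
      then have lds: "length ds + 1 = p" using la by simp
      have mds2: "mset (ds @ [a]) = mset bs'" using m mds by (simp add: add.commute add.left_commute)
      have ih1: "\<pi> as' zs = \<pi> (ds @ [b]) zs" if "length zs = r - 2 * length as'" for zs
        using Suc.IH[OF la mds] r that la by simp
      have ih2: "\<pi> (ds @ [a]) zs = \<pi> bs' zs" if "length zs = r - 2 * length (ds @ [a])" for zs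
        using Suc.IH[of "ds @ [a]" bs' zs] mds2 r that lds by simp
      have "\<pi> (as' @ [a]) xs = \<pi> ((ds @ [b]) @ [a]) xs"
        by (rule congr[OF ih1]) (use la lds0 r lx in simp_all)
      also have "\<dots> = \<pi> (ds @ [a, b]) xs"
      proof -
        have "2 * (length ds + 2) \<le> r" "length xs = r - 2 * (length ds + 2)"
          using lds r Suc.prems(4) by simp_all
        from swap[OF this, of b a] show ?thesis by simp
      qed
      also have "\<dots> = \<pi> ((ds @ [a]) @ [b]) xs" by simp
      also have "\<dots> = \<pi> (bs' @ [b]) xs"
        by (rule congr[OF ih2]) (use lds lb' r lx in simp_all)
      finally show ?thesis unfolding as bs .
    qed
  qed
  have c1: "SDer_Omega alg smul B r p \<pi>" if p: "2 * p \<le> r" for p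
  proof -
    have a1: "\<forall>as. length as = p \<longrightarrow> Omega_C alg smul B (r - 2 * p) (\<pi> as)"
      using P1 p by auto
    have a2: "\<forall>as i a b c xs. length as = p \<and> i < p \<and> length xs = r - 2 * p \<longrightarrow>
        \<pi> (as[i := a + b]) xs = \<pi> (as[i := a]) xs + \<pi> (as[i := b]) xs \<and>
        \<pi> (as[i := alg c * a]) xs = alg c * \<pi> (as[i := a]) xs \<and>
        \<pi> (as[i := a * b]) xs = a * \<pi> (as[i := b]) xs + b * \<pi> (as[i := a]) xs"
    proof (intro allI impI)
      fix as :: "'a list" and i a b c and xs :: "'e list"
      assume h: "length as = p \<and> i < p \<and> length xs = r - 2 * p"
      show "\<pi> (as[i := a + b]) xs = \<pi> (as[i := a]) xs + \<pi> (as[i := b]) xs \<and>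
        \<pi> (as[i := alg c * a]) xs = alg c * \<pi> (as[i := a]) xs \<and>
        \<pi> (as[i := a * b]) xs = a * \<pi> (as[i := b]) xs + b * \<pi> (as[i := a]) xs"
        using Lin[of as i xs a b c] h p by simp
    qed
    have a3: "\<forall>as bs xs. length as = p \<and> mset as = mset bs \<and> length xs = r - 2 * p \<longrightarrow>
        \<pi> as xs = \<pi> bs xs"
      using Sym p by blast
    show ?thesis unfolding SDer_Omega_def using a1 a2 a3 by blast
  qed
  have fam: "symbol_family alg smul B r \<omega> \<pi>"
    unfolding symbol_family_def using c1 P2 pnil by auto
  have uniq: "\<forall>as xs. 2 * length as \<le> r \<and> length xs = r - 2 * length as \<longrightarrow> \<pi>' as xs = \<pi> as xs"
    if f': "symbol_family alg smul B r \<omega> \<pi>'" for \<pi>'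
  proof (intro allI impI)
    fix as :: "'a list" and xs :: "'e list" assume "2 * length as \<le> r \<and> length xs = r - 2 * length as"
    then show "\<pi>' as xs = \<pi> as xs"
    proof (induction as arbitrary: xs rule: rev_induct)
      case Nil then show ?case using f' pnil unfolding symbol_family_def by simp
    next
      case (snoc a as)
      have h: "2 * (length as + 1) \<le> r" using snoc.prems by simp
      have s1: "is_symbol alg smul B (r - 2 * length as) (\<pi>' as) (\<lambda>xs a. \<pi>' (as @ [a]) xs)"
        using f' h unfolding symbol_family_def by blast
      have s2: "is_symbol alg smul B (r - 2 * length as) (\<pi> as) (\<lambda>xs a. \<pi> (as @ [a]) xs)"
        using P2 h by blast
      have ag: "\<forall>xs. length xs = r - 2 * length as \<longrightarrow> \<pi>' as xs = \<pi> as xs"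
        using snoc.IH h by simp
      have "length xs + 2 = r - 2 * length as" using snoc.prems by auto
      from symbol_unique[OF full s1 s2 ag this, of a] show ?case by simp
    qed
  qed
  show ?thesis using fam uniq by blast
qed


theorem mainTheorem8:
  fixes alg :: "'r::comm_ring_1 \<Rightarrow> 'a::comm_ring_1"
    and smul :: "'a \<Rightarrow> 'e::ab_group_add \<Rightarrow> 'e"
    and B :: "'e \<Rightarrow> 'e \<Rightarrow> 'a"
    and \<omega> :: "'e list \<Rightarrow> 'a"
    and r :: nat
  assumes QR_nontriv: "(0::'r) \<noteq> 1"
    and QR_inv: "\<forall>n::nat. 0 < n \<longrightarrow> (\<exists>y::'r. of_nat n * y = 1)"
    and alg: "ring_hom_map alg"
    and mod: "is_module smul"
    and proj: "fg_projective smul"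
    and bil: "bilinear_form smul B"
    and sym: "symmetric_form B"
    and nondeg: "strongly_nondegenerate smul B"
    and full: "full_form B"
    and om: "Omega_C alg smul B r \<omega>"
    and r2: "2 \<le> r"
  shows "\<exists>\<pi>. symbol_family alg smul B r \<omega> \<pi> \<and>
           (\<forall>\<pi>'. symbol_family alg smul B r \<omega> \<pi>' \<longrightarrow>
              (\<forall>as xs. 2 * length as \<le> r \<and> length xs = r - 2 * length as \<longrightarrow>
                 \<pi>' as xs = \<pi> as xs))"
  using main_exist[OF full om] .

end
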